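(* Let $G$ be a finite simple graph with initial configuration $c_0:V(G)\to\mathbb{Z}$, and $(c_t)_{t\ge0}$ the configurations of the diffusion process. If there exists a constant $M$ such that $|c_t(u)-c_t(v)|\leq M$ for all adjacent $u,v$ and all $t\geq 0$, then the chip configurations are eventually periodic.
   Context: Diffusion process: $c_{t+1}(u)=c_t(u)-|\{w\in N(u): c_t(u)>c_t(w)\}|+|\{w\in N(u): c_t(u)<c_t(w)\}|$ for all $u$ simultaneously. Eventually periodic means there exist $t\ge0$, $p\ge1$ with $c_{t+p}=c_t$. *)

theory Defs
  imports Main
begin

definition simple_graph :: "'a set \<Rightarrow> ('a \<Rightarrow> 'a \<Rightarrow> bool) \<Rightarrow> bool" where
  "simple_graph V E \<longleftrightarrow> finite V \<and> (\<forall>u v. E u v \<longrightarrow> u \<in> V \<and> v \<in> V)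
     \<and> (\<forall>u v. E u v \<longrightarrow> E v u) \<and> (\<forall>u. \<not> E u u)"

definition nbhd :: "'a set \<Rightarrow> ('a \<Rightarrow> 'a \<Rightarrow> bool) \<Rightarrow> 'a \<Rightarrow> 'a set" where
  "nbhd V E u = {w \<in> V. E u w}"

definition diffusion_step :: "'a set \<Rightarrow> ('a \<Rightarrow> 'a \<Rightarrow> bool) \<Rightarrow> ('a \<Rightarrow> int) \<Rightarrow> ('a \<Rightarrow> int)" where
  "diffusion_step V E c = (\<lambda>u. if u \<in> V then
       c u - int (card {w \<in> nbhd V E u. c u > c w}) + int (card {w \<in> nbhd V E u. c u < c w})
     else c u)"

definition config :: "'a set \<Rightarrow> ('a \<Rightarrow> 'a \<Rightarrow> bool) \<Rightarrow> ('a \<Rightarrow> int) \<Rightarrow> nat \<Rightarrow> ('a \<Rightarrow> int)" where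
  "config V E c0 t = (diffusion_step V E ^^ t) c0"

definition eventually_periodic :: "(nat \<Rightarrow> ('a \<Rightarrow> int)) \<Rightarrow> bool" where
  "eventually_periodic c \<longleftrightarrow> (\<exists>t p. p \<ge> 1 \<and> c (t + p) = c t)"

end

theory Submission
  imports Defs "HOL-Library.FuncSet"
begin

lemma card_int_sum: "finite A \<Longrightarrow> int (card {w\<in>A. P w}) = (\<Sum>w\<in>A. if P w then 1 else 0)"
  by (simp add: sum.inter_filter[symmetric])

lemma step_eq:
  assumes "finite V" "x \<in> V"
  shows "diffusion_step V E c x = c x + (\<Sum>w\<in>nbhd V E x. sgn (c w - c x))"
proof -
  have fin: "finite (nbhd V E x)" using assms by (simp add: nbhd_def)
  have "(\<Sum>w\<in>nbhd V E x. sgn (c w - c x)) =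
     (\<Sum>w\<in>nbhd V E x. (if c x < c w then 1 else 0) - (if c x > c w then 1 else 0))"
    by (rule sum.cong) (auto simp: sgn_if)
  also have "\<dots> = int (card {w \<in> nbhd V E x. c x < c w}) - int (card {w \<in> nbhd V E x. c x > c w})"
    using fin by (simp add: card_int_sum sum_subtractf)
  finally show ?thesis using assms by (simp add: diffusion_step_def)
qed

lemma conserve:
  assumes g: "simple_graph V E" and CV: "C \<subseteq> V"
    and cl: "\<forall>x\<in>C. \<forall>w. E x w \<longrightarrow> w \<in> C"
  shows "sum (diffusion_step V E c) C = sum c C"
proof -
  have finV: "finite V" using g by (simp add: simple_graph_def)
  have finC: "finite C" using CV finV finite_subset by blast
  have sym: "\<And>x w. E x w \<Longrightarrow> E w x" using g by (simp add: simple_graph_def)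
  define g' where "g' = (\<lambda>x w. if E x w then sgn (c w - c x) else (0::int))"
  have nb: "\<And>x. x \<in> C \<Longrightarrow> (\<Sum>w\<in>nbhd V E x. sgn (c w - c x)) = (\<Sum>w\<in>C. g' x w)"
  proof -
    fix x assume x: "x \<in> C"
    have "nbhd V E x = {w\<in>C. E x w}" using x cl CV by (auto simp: nbhd_def)
    then show "(\<Sum>w\<in>nbhd V E x. sgn (c w - c x)) = (\<Sum>w\<in>C. g' x w)"
      using finC by (simp add: g'_def sum.inter_filter)
  qed
  define S where "S = (\<Sum>x\<in>C. \<Sum>w\<in>C. g' x w)"
  have "S = (\<Sum>w\<in>C. \<Sum>x\<in>C. g' x w)" unfolding S_def by (rule sum.swap)
  also have "\<dots> = (\<Sum>w\<in>C. \<Sum>x\<in>C. - g' w x)"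
    by (intro sum.cong refl) (auto simp: g'_def sgn_if dest: sym)
  also have "\<dots> = - S" by (simp add: S_def sum_negf)
  finally have S0: "S = 0" by simp
  have "sum (diffusion_step V E c) C = (\<Sum>x\<in>C. c x + (\<Sum>w\<in>C. g' x w))"
    using CV finV by (intro sum.cong refl) (auto simp: step_eq nb)
  also have "\<dots> = sum c C + S" by (simp add: sum.distrib S_def)
  finally show ?thesis using S0 by simp
qed

lemma path_bound:
  assumes "\<forall>u v. E u v \<longrightarrow> \<bar>f u - f v\<bar> \<le> (M::int)"
  shows "(E ^^ n) u w \<Longrightarrow> \<bar>f u - f w\<bar> \<le> M * int n"
proof (induction n arbitrary: w)
  case 0 then show ?case by simp
next
  case (Suc n)
  then obtain y where y: "(E ^^ n) u y" "E y w" by (auto elim: relpowp_Suc_E)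
  have "\<bar>f u - f y\<bar> \<le> M * int n" using Suc.IH y(1) .
  moreover have "\<bar>f y - f w\<bar> \<le> M" using assms y(2) by blast
  ultimately show ?case by (simp add: algebra_simps)
qed

lemma config_off: "u \<notin> V \<Longrightarrow> config V E c0 t u = c0 u"
  by (induction t) (simp_all add: config_def diffusion_step_def)

lemma config_Suc: "config V E c0 (Suc t) = diffusion_step V E (config V E c0 t)"
  by (simp add: config_def)

theorem lemma4:
  fixes V :: "'a set" and E :: "'a \<Rightarrow> 'a \<Rightarrow> bool" and c0 :: "'a \<Rightarrow> int" and M :: int
  assumes "simple_graph V E"
    and "\<forall>t u v. E u v \<longrightarrow> \<bar>config V E c0 t u - config V E c0 t v\<bar> \<le> M"
  shows "eventually_periodic (config V E c0)"
proof -
  note g = assms(1)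
  have finV: "finite V" using g by (simp add: simple_graph_def)
  have EV: "\<And>x w. E x w \<Longrightarrow> w \<in> V" using g by (simp add: simple_graph_def)
  let ?c = "config V E c0"
  have bnd: "\<exists>K. \<forall>t. \<bar>?c t u\<bar> \<le> K" if u: "u \<in> V" for u
  proof -
    define C where "C = {w. E\<^sup>*\<^sup>* u w}"
    have CV: "C \<subseteq> V"
    proof
      fix w assume "w \<in> C"
      then have "E\<^sup>*\<^sup>* u w" by (simp add: C_def)
      then show "w \<in> V" by (induction rule: rtranclp_induct) (auto simp: u dest: EV)
    qed
    have finC: "finite C" using CV finV finite_subset by blast
    have cl: "\<forall>x\<in>C. \<forall>w. E x w \<longrightarrow> w \<in> C" by (auto simp: C_def)
    have uC: "u \<in> C" by (simp add: C_def)
    have cons: "sum (?c t) C = sum c0 C" for t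
    proof (induction t)
      case 0 then show ?case by (simp add: config_def)
    next
      case (Suc t) then show ?case using conserve[OF g CV cl] by (simp add: config_Suc)
    qed
    have "\<forall>w\<in>C. \<exists>n. (E ^^ n) u w" by (auto simp: C_def rtranclp_power)
    then obtain nf where nf: "\<And>w. w \<in> C \<Longrightarrow> (E ^^ nf w) u w" by metis
    define B where "B = (\<Sum>w\<in>C. M * int (nf w))"
    have "\<bar>?c t u\<bar> \<le> \<bar>sum c0 C\<bar> + B" for t
    proof -
      have d: "\<And>w. w \<in> C \<Longrightarrow> \<bar>?c t u - ?c t w\<bar> \<le> M * int (nf w)"
        using path_bound[of E "?c t" M] assms(2) nf by blast
      have "(\<Sum>w\<in>C. ?c t u - ?c t w) \<le> B" unfolding B_def
        using d by (intro sum_mono) (simp add: abs_le_iff)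
      moreover have "-B \<le> (\<Sum>w\<in>C. ?c t u - ?c t w)" unfolding B_def
        using d by (simp add: sum_negf[symmetric]) (intro sum_mono, fastforce)
      moreover have "(\<Sum>w\<in>C. ?c t u - ?c t w) = int (card C) * ?c t u - sum c0 C"
        by (simp add: sum_subtractf cons)
      moreover have "card C \<ge> 1" using finC uC by (metis One_nat_def Suc_leI card_gt_0_iff empty_iff)
      ultimately have "\<bar>int (card C) * ?c t u\<bar> \<le> \<bar>sum c0 C\<bar> + B" by linarith
      moreover have "\<bar>?c t u\<bar> \<le> \<bar>int (card C) * ?c t u\<bar>"
        using \<open>card C \<ge> 1\<close> by (simp add: abs_mult mult_le_cancel_right1)
      ultimately show ?thesis by linarith
    qed
    then show ?thesis by blast
  qed
  then obtain Kf where Kf: "\<And>u t. u \<in> V \<Longrightarrow> \<bar>?c t u\<bar> \<le> Kf u" by metis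
  define K where "K = (\<Sum>u\<in>V. \<bar>Kf u\<bar>)"
  have KK: "\<bar>?c t u\<bar> \<le> K" if "u \<in> V" for t u
  proof -
    have "Kf u \<le> \<bar>Kf u\<bar>" by simp
    also have "\<bar>Kf u\<bar> \<le> K" unfolding K_def using finV that
      by (intro member_le_sum) auto
    finally show ?thesis using Kf[OF that, of t] by linarith
  qed
  define A where "A = {f. (\<forall>x. x \<notin> V \<longrightarrow> f x = c0 x) \<and> (\<forall>x\<in>V. f x \<in> {-K..K})}"
  have rA: "range ?c \<subseteq> A"
  proof
    fix f assume "f \<in> range ?c"
    then obtain t where f: "f = ?c t" by blast
    have "\<forall>x. x \<notin> V \<longrightarrow> f x = c0 x" using f config_off by metis
    moreover have "\<forall>x\<in>V. f x \<in> {-K..K}"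
    proof
      fix x assume "x \<in> V"
      from KK[OF this, of t] show "f x \<in> {-K..K}" using f by (simp add: abs_le_iff)
    qed
    ultimately show "f \<in> A" unfolding A_def by blast
  qed
  have "inj_on (\<lambda>f. restrict f V) A"
    unfolding A_def inj_on_def by (auto simp: fun_eq_iff restrict_def) metis
  moreover have "(\<lambda>f. restrict f V) ` A \<subseteq> PiE V (\<lambda>_. {-K..K})"
    unfolding A_def by auto
  moreover have "finite (PiE V (\<lambda>_. {-K..K}))" using finV by (intro finite_PiE) auto
  ultimately have "finite A" by (meson finite_imageD finite_subset)
  then have "finite (range ?c)" using rA finite_subset by blast
  then have "\<not> inj ?c" using finite_imageD infinite_UNIV_nat by blast
  then obtain t1 t2 where "t1 \<noteq> t2" "?c t1 = ?c t2" unfolding inj_def by blast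
  then obtain a b where ab: "a < b" "?c a = ?c b"
    by (metis linorder_neqE_nat)
  then show ?thesis unfolding eventually_periodic_def
    by (intro exI[of _ a] exI[of _ "b - a"]) auto
qed

end
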